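(* Let $\mathcal{H}$ be a complex Hilbert space, $R,S\in\mathbb{B}(\mathcal{H})$, and let $T=\begin{bmatrix}0&R\\ S&0\end{bmatrix}$, regarded as an operator on $\mathcal{H}\oplus\mathcal{H}$. If $(\|R\|+\|S\|)^2\le 2\,g(T)$, where \[ g(T)=\|T\|^2+\max\big(\alpha(T),\alpha(T^* )\big)-D(T), \] then \[ \omega(T)=\frac{\|R\|+\|S\|}{2}. \]
   Context: $\mathbb{B}(\mathcal{H})$ denotes the bounded linear operators on $\mathcal{H}$. For a bounded operator $A$ on a Hilbert space $\mathcal{K}$ (here $\mathcal{K}=\mathcal{H}\oplus\mathcal{H}$): $\omega(A)=\sup\{|\langle Ax,x\rangle| : x\in\mathcal{K},\ \|x\|=1\}$ (numerical radius); $\|A\|$ is the operator norm; $\alpha(A)=\inf_{\|x\|=1}\|Ax\|^2$; $D(A)=2\min(\|A_1\|^2,\|A_2\|^2)$ where $A_1=\frac{A+A^*}{2}$, $A_2=\frac{A-A^*}{2i}$. *)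

theory Defs
  imports "HOL-Analysis.Analysis"
begin

text \<open>A complex inner product space is a real inner product space (which supplies
  the norm, metric and topology) with a complex scalar multiplication and a
  complex (Hermitian, linear in the first argument) inner product whose real
  part is the real inner product, so that the norm is the one induced by cinner.\<close>

class complex_inner = real_inner +
  fixes scaleC :: "complex \<Rightarrow> 'a \<Rightarrow> 'a"  (infixr \<open>*\<^sub>C\<close> 75)
    and cinner :: "'a \<Rightarrow> 'a \<Rightarrow> complex"
  assumes scaleC_add_right: "a *\<^sub>C (x + y) = a *\<^sub>C x + a *\<^sub>C y"
    and scaleC_add_left: "(a + b) *\<^sub>C x = a *\<^sub>C x + b *\<^sub>C x"
    and scaleC_scaleC: "a *\<^sub>C (b *\<^sub>C x) = (a * b) *\<^sub>C x"
    and scaleC_one: "1 *\<^sub>C x = x"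
    and scaleR_scaleC: "r *\<^sub>R x = complex_of_real r *\<^sub>C x"
    and cinner_commute: "cinner x y = cnj (cinner y x)"
    and cinner_add_left: "cinner (x + y) z = cinner x z + cinner y z"
    and cinner_scaleC_left: "cinner (a *\<^sub>C x) y = a * cinner x y"
    and Re_cinner: "Re (cinner x y) = inner x y"

class chilbert_space = complex_inner + complete_space

instantiation prod :: (complex_inner, complex_inner) complex_inner
begin
definition scaleC_prod_def: "a *\<^sub>C x = (a *\<^sub>C fst x, a *\<^sub>C snd x)"
definition cinner_prod_def: "cinner x y = cinner (fst x) (fst y) + cinner (snd x) (snd y)"
instance
proof
  fix a b :: complex and x y z :: "'a \<times> 'b" and r :: real
  show "a *\<^sub>C (x + y) = a *\<^sub>C x + a *\<^sub>C y"
    by (simp add: scaleC_prod_def scaleC_add_right)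
  show "(a + b) *\<^sub>C x = a *\<^sub>C x + b *\<^sub>C x"
    by (simp add: scaleC_prod_def scaleC_add_left)
  show "a *\<^sub>C (b *\<^sub>C x) = (a * b) *\<^sub>C x"
    by (simp add: scaleC_prod_def scaleC_scaleC)
  show "1 *\<^sub>C x = x"
    by (simp add: scaleC_prod_def scaleC_one)
  show "r *\<^sub>R x = complex_of_real r *\<^sub>C x"
    by (simp add: scaleC_prod_def scaleR_prod_def scaleR_scaleC)
  show "cinner x y = cnj (cinner y x)"
    by (simp add: cinner_prod_def cinner_commute[of "fst x"] cinner_commute[of "snd x"])
  show "cinner (x + y) z = cinner x z + cinner y z"
    by (simp add: cinner_prod_def cinner_add_left)
  show "cinner (a *\<^sub>C x) y = a * cinner x y"
    by (simp add: cinner_prod_def scaleC_prod_def cinner_scaleC_left distrib_left)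
  show "Re (cinner x y) = inner x y"
    by (simp add: cinner_prod_def inner_prod_def Re_cinner)
qed
end

instance prod :: (chilbert_space, chilbert_space) chilbert_space ..

definition bounded_clinear :: "('a::complex_inner \<Rightarrow> 'b::complex_inner) \<Rightarrow> bool" where
  "bounded_clinear f \<longleftrightarrow>
     (\<forall>x y. f (x + y) = f x + f y) \<and> (\<forall>c x. f (c *\<^sub>C x) = c *\<^sub>C f x) \<and>
     (\<exists>K. \<forall>x. norm (f x) \<le> norm x * K)"

definition cadjoint :: "('a::complex_inner \<Rightarrow> 'a) \<Rightarrow> ('a \<Rightarrow> 'a)" where
  "cadjoint A = (\<lambda>y. THE z. \<forall>x. cinner (A x) y = cinner x z)"

definition numrad :: "('a::complex_inner \<Rightarrow> 'a) \<Rightarrow> real" where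
  "numrad A = Sup {cmod (cinner (A x) x) | x. norm x = 1}"

definition alpha_op :: "('a::complex_inner \<Rightarrow> 'a) \<Rightarrow> real" where
  "alpha_op A = Inf {(norm (A x))\<^sup>2 | x. norm x = 1}"

definition re_part :: "('a::complex_inner \<Rightarrow> 'a) \<Rightarrow> ('a \<Rightarrow> 'a)" where
  "re_part A = (\<lambda>x. (1/2) *\<^sub>C (A x + cadjoint A x))"

definition im_part :: "('a::complex_inner \<Rightarrow> 'a) \<Rightarrow> ('a \<Rightarrow> 'a)" where
  "im_part A = (\<lambda>x. (1/(2*\<i>)) *\<^sub>C (A x - cadjoint A x))"

definition D_op :: "('a::complex_inner \<Rightarrow> 'a) \<Rightarrow> real" where
  "D_op A = 2 * min ((onorm (re_part A))\<^sup>2) ((onorm (im_part A))\<^sup>2)"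

definition g_op :: "('a::complex_inner \<Rightarrow> 'a) \<Rightarrow> real" where
  "g_op T = (onorm T)\<^sup>2 + max (alpha_op T) (alpha_op (cadjoint T)) - D_op T"

definition offdiag :: "('a \<Rightarrow> 'a) \<Rightarrow> ('a \<Rightarrow> 'a) \<Rightarrow> ('a \<times> 'a \<Rightarrow> 'a \<times> 'a)" where
  "offdiag R S = (\<lambda>(x, y). (R y, S x))"

end

theory Submission
  imports Defs
begin

lemma onorm_le_gen:
  assumes "0 \<le> b" "\<And>x. norm (f x) \<le> b * norm x"
  shows "norm (f x) \<le> onorm f * norm x" and "0 \<le> onorm f"
proof -
  have bd: "bdd_above (range (\<lambda>x. norm (f x) / norm x))"
  proof (rule bdd_aboveI2)
    fix x show "norm (f x) / norm x \<le> b"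
      using assms(1) assms(2)[of x] by (cases "x = 0") (simp_all add: pos_divide_le_eq)
  qed
  have h: "norm (f y) / norm y \<le> onorm f" for y
    unfolding onorm_def by (rule cSUP_upper[OF UNIV_I bd])
  show "0 \<le> onorm f" using h[of 0] by simp
  show "norm (f x) \<le> onorm f * norm x"
  proof (cases "x = 0")
    case True then show ?thesis using assms(2)[of x] by simp
  next
    case False then show ?thesis using h[of x] by (simp add: divide_le_eq)
  qed
qed


lemma cinner_scaleC_right: "cinner (x::'a::complex_inner) (a *\<^sub>C y) = cnj a * cinner x y"
  by (metis cinner_commute cinner_scaleC_left complex_cnj_cnj complex_cnj_mult)

lemma cinner_add_right: "cinner (x::'a::complex_inner) (y + z) = cinner x y + cinner x z"
  by (metis cinner_commute cinner_add_left complex_cnj_add)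

lemma cinner_zero_left[simp]: "cinner 0 y = 0"
  using cinner_add_left[of 0 0 y] by simp

lemma cinner_zero_right[simp]: "cinner (x::'a::complex_inner) 0 = 0"
  using cinner_add_right[of x 0 0] by simp

lemma cinner_minus_left: "cinner (- (x::'a::complex_inner)) y = - cinner x y"
proof -
  have "cinner x y + cinner (- x) y = 0" using cinner_add_left[of x "-x" y] by simp
  then have "cinner (- x) y + cinner x y = 0" by (subst add.commute) assumption
  then have "cinner (- x) y = 0 - cinner x y" by (rule add_implies_diff)
  then show ?thesis by simp
qed

lemma cinner_diff_left: "cinner ((x::'a::complex_inner) - y) z = cinner x z - cinner y z"
  using cinner_add_left[of x "-y" z] cinner_minus_left[of y z] by simp

lemma cinner_minus_right: "cinner (x::'a::complex_inner) (- y) = - cinner x y"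
  by (metis cinner_commute cinner_minus_left complex_cnj_minus)

lemma cinner_diff_right: "cinner (x::'a::complex_inner) (y - z) = cinner x y - cinner x z"
  using cinner_add_right[of x y "-z"] cinner_minus_right[of x z] by simp

lemma cinner_scaleR_left: "cinner (r *\<^sub>R (x::'a::complex_inner)) y = of_real r * cinner x y"
  by (simp add: scaleR_scaleC cinner_scaleC_left)

lemma cinner_scaleR_right: "cinner (x::'a::complex_inner) (r *\<^sub>R y) = of_real r * cinner x y"
  by (simp add: scaleR_scaleC cinner_scaleC_right)

lemma cinner_self: "cinner (x::'a::complex_inner) x = complex_of_real ((norm x)\<^sup>2)"
proof -
  have "Re (cinner x x) = (norm x)\<^sup>2" by (simp add: Re_cinner power2_norm_eq_inner)
  moreover have "Im (cinner x x) = 0"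
    using cinner_commute[of x x] by (metis Im_complex_of_real Reals_cnj_iff complex_is_Real_iff)
  ultimately show ?thesis by (simp add: complex_eq_iff)
qed

lemma norm_scaleC: "norm (a *\<^sub>C (x::'a::complex_inner)) = cmod a * norm x"
proof -
  have "complex_of_real ((norm (a *\<^sub>C x))\<^sup>2) = cinner (a *\<^sub>C x) (a *\<^sub>C x)"
    by (simp only: cinner_self)
  also have "\<dots> = (a * cnj a) * cinner x x"
    by (simp add: cinner_scaleC_left cinner_scaleC_right)
  also have "a * cnj a = complex_of_real ((cmod a)\<^sup>2)"
    by (metis complex_norm_square of_real_power)
  also have "complex_of_real ((cmod a)\<^sup>2) * cinner x x = complex_of_real ((cmod a * norm x)\<^sup>2)"
    by (simp only: cinner_self of_real_mult[symmetric] power_mult_distrib)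
  finally have "(norm (a *\<^sub>C x))\<^sup>2 = (cmod a * norm x)\<^sup>2" using of_real_eq_iff by blast
  then show ?thesis by (simp add: power2_eq_iff_nonneg)
qed

lemma cinner_cauchy: "cmod (cinner (x::'a::complex_inner) y) \<le> norm x * norm y"
proof (cases "cinner x y = 0")
  case True then show ?thesis by simp
next
  case False
  define c where "c = cinner x y"
  define u where "u = cnj c / complex_of_real (cmod c)"
  have cu: "cmod u = 1" using False by (simp add: u_def c_def norm_divide)
  have "cinner (u *\<^sub>C x) y = complex_of_real (cmod c)"
  proof -
    have "cnj c * c = complex_of_real ((cmod c)\<^sup>2)" by (metis complex_norm_square of_real_power mult.commute)
    moreover have "cmod c \<noteq> 0" using False c_def by simp
    ultimately show ?thesis
      by (simp add: cinner_scaleC_left u_def c_def[symmetric] power2_eq_square)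
  qed
  then have "cmod c = inner (u *\<^sub>C x) y" using Re_cinner[of "u *\<^sub>C x" y] by simp
  also have "\<dots> \<le> norm (u *\<^sub>C x) * norm y" by (rule norm_cauchy_schwarz)
  also have "\<dots> = norm x * norm y" by (simp add: norm_scaleC cu)
  finally show ?thesis by (simp add: c_def)
qed

lemma cinner_eq_zero_self: "cinner (x::'a::complex_inner) x = 0 \<longleftrightarrow> x = 0"
  by (simp add: cinner_self)

lemma ext_cinner: assumes "\<And>(x::'a::complex_inner). cinner x a = cinner x b" shows "a = b"
proof -
  have "cinner (a - b) (a - b) = 0" using assms[of "a - b"] by (simp add: cinner_diff_right)
  then show ?thesis by (simp add: cinner_eq_zero_self)
qed

lemma quad_nonneg_zero:
  fixes a b :: real
  assumes "\<And>t. 0 \<le> a * t + b * t\<^sup>2"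
  shows "a = 0"
proof (rule ccontr)
  assume "a \<noteq> 0"
  define s where "s = 1 / (\<bar>b\<bar> + 1)"
  have s0: "0 < s" by (simp add: s_def add_pos_nonneg)
  have bs: "b * s < 1"
  proof -
    have "b * s \<le> \<bar>b\<bar> * s" using s0 by (simp add: mult_right_mono)
    also have "\<dots> < 1" by (simp add: s_def divide_less_eq)
    finally show ?thesis .
  qed
  have "a * (- a * s) + b * (- a * s)\<^sup>2 = a\<^sup>2 * s * (b * s - 1)"
    by (simp add: power2_eq_square algebra_simps)
  also have "\<dots> < 0"
    using \<open>a \<noteq> 0\<close> s0 bs by (simp add: mult_pos_neg)
  finally show False using assms[of "- a * s"] by simp
qed

lemma riesz_real:
  fixes f :: "'b::{real_inner,complete_space} \<Rightarrow> real"
  assumes bl: "bounded_linear f"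
  shows "\<exists>z. \<forall>x. f x = inner x z"
proof -
  interpret f: bounded_linear f by (rule bl)
  define F where "F = onorm f"
  have F0: "0 \<le> F" unfolding F_def by (rule onorm_pos_le[OF bl])
  have fb: "\<bar>f x\<bar> \<le> F * norm x" for x using onorm[OF bl, of x] by (simp add: F_def)
  show ?thesis
  proof (cases "F = 0")
    case True
    then have "f x = 0" for x using fb[of x] by simp
    then show ?thesis by (intro exI[of _ 0]) simp
  next
    case False
    then have Fp: "0 < F" using F0 by simp
    have bdd: "bdd_above (range (\<lambda>x. norm (f x) / norm x))"
    proof (rule bdd_aboveI2)
      fix x show "norm (f x) / norm x \<le> F"
        using fb[of x] F0 by (cases "x = 0") (simp_all add: pos_divide_le_eq)
    qed
    have ex: "\<exists>w. norm w = 1 \<and> F - F * inverse (real (Suc n)) < f w" for n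
    proof -
      have "F - F * inverse (real (Suc n)) < (SUP x. norm (f x) / norm x)"
      proof -
        have "(SUP x. norm (f x) / norm x) = F" by (simp add: F_def onorm_def)
        moreover have "0 < F * inverse (real (Suc n))" using Fp by simp
        ultimately show ?thesis by linarith
      qed
      then obtain x where x: "F - F * inverse (real (Suc n)) < norm (f x) / norm x"
        using less_cSUP_iff[OF _ bdd] by auto
      have "0 \<le> F * (1 - inverse (real (Suc n)))"
        using F0 by (simp add: inverse_le_1_iff)
      then have qpos: "0 < norm (f x) / norm x" using x by (simp add: algebra_simps)
      then have "x \<noteq> 0" by auto
      then have nx: "0 < norm x" by simp
      define w where "w = (sgn (f x) / norm x) *\<^sub>R x"
      have fx0: "f x \<noteq> 0" using qpos by auto
      have "norm w = 1" using nx fx0 by (simp add: w_def abs_sgn)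
      moreover have "f w = \<bar>f x\<bar> / norm x"
        by (simp add: w_def f.scaleR sgn_mult_self_eq abs_sgn sgn_mult_abs)
      ultimately show ?thesis using x by auto
    qed
    then obtain X where X: "\<And>n. norm (X n) = 1" "\<And>n. F - F * inverse (real (Suc n)) < f (X n)"
      by metis
    define e where "e n = inverse (real (Suc n))" for n
    have e0: "0 \<le> e n" for n using Fp by (simp add: e_def)
    have dist_bound: "(norm (X m - X n))\<^sup>2 \<le> 4 * (e m + e n)" for m n
    proof -
      have ii: "inner (X k) (X k) = 1" for k
        using X(1)[of k] by (metis power2_norm_eq_inner power_one)
      have par: "(norm (X m - X n))\<^sup>2 = 4 - (norm (X m + X n))\<^sup>2"
        using ii[of m] ii[of n]
        by (simp add: power2_norm_eq_inner inner_add_left inner_add_right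
            inner_diff_left inner_diff_right inner_commute)
      have "2 * F - F * inverse (real (Suc m)) - F * inverse (real (Suc n)) < f (X m + X n)"
        using X(2)[of m] X(2)[of n] by (simp add: f.add)
      also have "\<dots> \<le> F * norm (X m + X n)" using fb[of "X m + X n"] by simp
      finally have "F * (2 - e m - e n) < F * norm (X m + X n)"
        using Fp by (simp add: e_def algebra_simps)
      then have lb: "2 - e m - e n < norm (X m + X n)" using Fp by simp
      show ?thesis
      proof (cases "0 \<le> 2 - e m - e n")
        case True
        then have "(2 - e m - e n)\<^sup>2 \<le> (norm (X m + X n))\<^sup>2"
          using lb by (intro power_mono) auto
        moreover have "(2 - e m - e n)\<^sup>2 = 4 - 4 * (e m + e n) + (e m + e n)\<^sup>2"
          by (simp add: power2_eq_square algebra_simps)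
        moreover have "0 \<le> (e m + e n)\<^sup>2" by simp
        ultimately show ?thesis using par by linarith
      next
        case False
        have "(norm (X m - X n))\<^sup>2 \<le> 4" using par by simp
        then show ?thesis using False by simp
      qed
    qed
    have "Cauchy X"
    proof (rule CauchyI)
      fix eps :: real assume "0 < eps"
      then have "0 < eps\<^sup>2 / 8" by simp
      then obtain N where N: "inverse (real (Suc N)) < eps\<^sup>2 / 8"
        using reals_Archimedean by blast
      have "norm (X m - X n) < eps" if "m \<ge> N" "n \<ge> N" for m n
      proof -
        have em: "e m \<le> e N" "e n \<le> e N"
          using that Fp by (auto simp: e_def divide_right_mono intro!: le_imp_inverse_le)
        have "8 * e N < eps\<^sup>2" using N by (simp add: e_def)
        moreover have "4 * (e m + e n) \<le> 8 * e N" using em by (smt (verit))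
        ultimately have "(norm (X m - X n))\<^sup>2 < eps\<^sup>2"
          using dist_bound[of m n] by (meson le_less_trans order_trans)
        then show ?thesis using \<open>0 < eps\<close> by (simp add: power_less_imp_less_base)
      qed
      then show "\<exists>M. \<forall>m\<ge>M. \<forall>n\<ge>M. norm (X m - X n) < eps" by blast
    qed
    then obtain x where lim: "X \<longlonglongrightarrow> x"
      using Cauchy_convergent_iff convergent_def by blast
    have "(\<lambda>n. norm (X n)) \<longlonglongrightarrow> norm x" by (rule tendsto_norm[OF lim])
    then have nx: "norm x = 1" using X(1) by (simp add: LIMSEQ_const_iff)
    have flim: "(\<lambda>n. f (X n)) \<longlonglongrightarrow> f x" by (rule f.tendsto[OF lim])
    have lo: "(\<lambda>n. F - F * inverse (real (Suc n))) \<longlonglongrightarrow> F - F * 0"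
      by (intro tendsto_intros LIMSEQ_inverse_real_of_nat)
    have "F \<le> f x"
      using LIMSEQ_le[OF lo flim] X(2) less_imp_le by auto
    moreover have "f x \<le> F" using fb[of x] nx by simp
    ultimately have fx: "f x = F" by simp
    have key: "f y = F * inner x y" for y
    proof -
      have "0 \<le> (2 * (F\<^sup>2 * inner x y - F * f y)) * t + (F\<^sup>2 * (norm y)\<^sup>2 - (f y)\<^sup>2) * t\<^sup>2" for t
      proof -
        have "(f (x + t *\<^sub>R y))\<^sup>2 \<le> (F * norm (x + t *\<^sub>R y))\<^sup>2"
          using fb[of "x + t *\<^sub>R y"] by (metis abs_ge_zero order_trans power_mono power2_abs)
        moreover have "(f (x + t *\<^sub>R y))\<^sup>2 = (F + t * f y)\<^sup>2" by (simp add: f.add f.scaleR fx)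
        moreover have "(norm (x + t *\<^sub>R y))\<^sup>2 = 1 + 2 * t * inner x y + t\<^sup>2 * (norm y)\<^sup>2"
        proof -
          have "inner x x = 1" using nx by (metis power2_norm_eq_inner power_one)
          then show ?thesis
            by (simp only: power2_norm_eq_inner inner_add_left inner_add_right inner_scaleR_left
                inner_scaleR_right inner_commute[of y x]) (simp add: power2_eq_square algebra_simps)
        qed
        ultimately show ?thesis by (simp add: power2_eq_square algebra_simps)
      qed
      then have "2 * (F\<^sup>2 * inner x y - F * f y) = 0" by (rule quad_nonneg_zero)
      then show ?thesis using Fp by (simp add: power2_eq_square)
    qed
    show ?thesis by (intro exI[of _ "F *\<^sub>R x"]) (simp add: key inner_commute)
  qed
qed

lemma bcl_bl: assumes "bounded_clinear f" shows "bounded_linear f"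
proof -
  have add: "\<And>x y. f (x + y) = f x + f y"
    and sc: "\<And>c x. f (c *\<^sub>C x) = c *\<^sub>C f x" using assms by (simp_all add: bounded_clinear_def)
  obtain K where K: "\<And>x. norm (f x) \<le> norm x * K"
    using assms by (auto simp add: bounded_clinear_def)
  show ?thesis
    by (rule bounded_linear_intro[OF add _ K]) (simp add: scaleR_scaleC sc)
qed

lemma bcl_scaleC: "bounded_clinear f \<Longrightarrow> f (c *\<^sub>C x) = c *\<^sub>C f x"
  by (simp add: bounded_clinear_def)

lemma sgn_decomp: "norm x *\<^sub>R sgn x = (x::'a::real_normed_vector)"
  by (cases "x = 0") (simp_all add: sgn_div_norm)

lemma adjoint_exists:
  fixes A :: "'b::chilbert_space \<Rightarrow> 'b"
  assumes bA: "bounded_clinear A"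
  shows "\<exists>z. \<forall>x. cinner (A x) y = cinner x z"
proof -
  interpret A: bounded_linear A by (rule bcl_bl[OF bA])
  obtain K where K: "\<And>x. norm (A x) \<le> norm x * K" using bA by (auto simp add: bounded_clinear_def)
  define f where "f x = Re (cinner (A x) y)" for x
  have "bounded_linear f"
  proof (rule bounded_linear_intro[where K = "K * norm y"])
    fix x1 x2 show "f (x1 + x2) = f x1 + f x2" by (simp add: f_def A.add cinner_add_left)
  next
    fix r x show "f (r *\<^sub>R x) = r *\<^sub>R f x" by (simp add: f_def A.scaleR cinner_scaleR_left)
  next
    fix x
    have "norm (f x) \<le> cmod (cinner (A x) y)" by (simp add: f_def abs_Re_le_cmod)
    also have "\<dots> \<le> norm (A x) * norm y" by (rule cinner_cauchy)
    also have "\<dots> \<le> norm x * K * norm y" by (rule mult_right_mono[OF K norm_ge_zero])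
    finally show "norm (f x) \<le> norm x * (K * norm y)" by (simp add: mult.assoc)
  qed
  then obtain z where z: "\<And>x. f x = inner x z" using riesz_real by blast
  have re: "Re (cinner (A x) y) = Re (cinner x z)" for x using z[of x] by (simp add: f_def Re_cinner)
  have "cinner (A x) y = cinner x z" for x
  proof (rule complex_eqI)
    show "Re (cinner (A x) y) = Re (cinner x z)" by (rule re)
    have "Re (cinner (A (\<i> *\<^sub>C x)) y) = Re (cinner (\<i> *\<^sub>C x) z)" by (rule re)
    then show "Im (cinner (A x) y) = Im (cinner x z)"
      by (simp add: bcl_scaleC[OF bA] cinner_scaleC_left)
  qed
  then show ?thesis by blast
qed

lemma cadjoint_prop:
  fixes A :: "'b::chilbert_space \<Rightarrow> 'b"
  assumes bA: "bounded_clinear A"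
  shows "cinner (A x) y = cinner x (cadjoint A y)"
proof -
  have "\<exists>!z. \<forall>x. cinner (A x) y = cinner x z"
  proof -
    obtain z where "\<forall>x. cinner (A x) y = cinner x z" using adjoint_exists[OF bA] by blast
    moreover have "z' = z" if "\<forall>x. cinner (A x) y = cinner x z'" "\<forall>x. cinner (A x) y = cinner x z" for z'
      using that by (intro ext_cinner) metis
    ultimately show ?thesis by blast
  qed
  then have "\<forall>x. cinner (A x) y = cinner x (THE z. \<forall>x. cinner (A x) y = cinner x z)"
    by (rule theI')
  then show ?thesis unfolding cadjoint_def by blast
qed

lemma parallelogram_real_inner:
  fixes x y :: "'a::real_inner"
  shows "(norm (x + y))\<^sup>2 + (norm (x - y))\<^sup>2 = 2 * (norm x)\<^sup>2 + 2 * (norm y)\<^sup>2"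
  by (simp only: power2_norm_eq_inner inner_add_left inner_add_right inner_diff_left
      inner_diff_right inner_commute[of y x])

lemma unit_decomp:
  fixes x :: "'a::real_normed_vector"
  assumes "\<exists>z::'a. norm z = 1"
  shows "\<exists>w. norm w = 1 \<and> x = norm x *\<^sub>R w"
proof (cases "x = 0")
  case True then show ?thesis using assms by auto
next
  case False then show ?thesis by (intro exI[of _ "sgn x"]) (simp add: norm_sgn sgn_decomp)
qed

lemma herm_bound:
  fixes T :: "'b::complex_inner \<Rightarrow> 'b" and H :: "'b \<Rightarrow> 'b"
  assumes bT: "bounded_linear T"
    and om: "\<And>z. cmod (cinner (T z) z) \<le> \<omega> * (norm z)\<^sup>2"
    and om0: "0 \<le> \<omega>"
    and c: "cmod c \<le> 1/2"
    and H: "\<And>u v. Re (cinner (H u) v) = Re (c * cinner (T u) v) + Re (c * cinner (T v) u)"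
  shows "norm (H x) \<le> \<omega> * norm x"
proof -
  interpret T: bounded_linear T by (rule bT)
  define q where "q u v = Re (c * cinner (T u) v) + Re (c * cinner (T v) u)" for u v
  have qH: "inner (H u) v = q u v" for u v using H[of u v] by (simp add: q_def Re_cinner)
  have qz: "q z z \<le> \<omega> * (norm z)\<^sup>2" for z
  proof -
    have "q z z = 2 * Re (c * cinner (T z) z)" by (simp add: q_def)
    also have "\<dots> \<le> 2 * cmod (c * cinner (T z) z)"
      using complex_Re_le_cmod[of "c * cinner (T z) z"] by linarith
    also have "\<dots> = 2 * cmod c * cmod (cinner (T z) z)" by (simp add: norm_mult)
    also have "\<dots> \<le> 2 * (1/2) * cmod (cinner (T z) z)"
      using c by (intro mult_right_mono) auto
    also have "\<dots> \<le> \<omega> * (norm z)\<^sup>2" using om[of z] by simp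
    finally show ?thesis .
  qed
  have qz': "- q z z \<le> \<omega> * (norm z)\<^sup>2" for z
  proof -
    have "- q z z = 2 * Re (- (c * cinner (T z) z))" by (simp add: q_def)
    also have "\<dots> \<le> 2 * cmod (- (c * cinner (T z) z))"
      using complex_Re_le_cmod[of "- (c * cinner (T z) z)"] by linarith
    also have "\<dots> = 2 * cmod c * cmod (cinner (T z) z)" by (simp add: norm_mult)
    also have "\<dots> \<le> 2 * (1/2) * cmod (cinner (T z) z)"
      using c by (intro mult_right_mono) auto
    also have "\<dots> \<le> \<omega> * (norm z)\<^sup>2" using om[of z] by simp
    finally show ?thesis .
  qed
  have pol: "4 * q u v = q (u + v) (u + v) - q (u - v) (u - v)" for u v
    by (simp add: q_def T.add T.diff cinner_add_left cinner_add_right cinner_diff_left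
        cinner_diff_right algebra_simps)
  have pb: "4 * q u v \<le> 2 * \<omega> * ((norm u)\<^sup>2 + (norm v)\<^sup>2)" for u v
  proof -
    have "4 * q u v \<le> \<omega> * (norm (u + v))\<^sup>2 + \<omega> * (norm (u - v))\<^sup>2"
      using pol[of u v] qz[of "u + v"] qz'[of "u - v"] by linarith
    also have "\<dots> = \<omega> * ((norm (u + v))\<^sup>2 + (norm (u - v))\<^sup>2)" by (simp add: algebra_simps)
    also have "\<dots> = 2 * \<omega> * ((norm u)\<^sup>2 + (norm v)\<^sup>2)"
      using parallelogram_real_inner[of u v] by (simp add: algebra_simps)
    finally show ?thesis .
  qed
  show ?thesis
  proof (cases "x = 0")
    case True
    have "inner (H 0) (H 0) = 0" by (simp add: qH q_def T.zero)
    then show ?thesis using True by simp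
  next
    case False
    define s where "s = norm (H x)"
    show ?thesis
    proof (cases "s = 0")
      case True then show ?thesis using om0 by (simp add: s_def)
    next
      case sF: False
      then have s0: "0 < s" by (simp add: s_def)
      define t where "t = norm x / s"
      have "q x (t *\<^sub>R H x) = t * s\<^sup>2"
        by (simp add: qH[symmetric] s_def power2_norm_eq_inner)
      then have "4 * (t * s\<^sup>2) \<le> 2 * \<omega> * ((norm x)\<^sup>2 + (norm (t *\<^sub>R H x))\<^sup>2)"
        using pb[of x "t *\<^sub>R H x"] by simp
      moreover have "norm (t *\<^sub>R H x) = norm x"
        using s0 by (simp add: t_def s_def)
      moreover have "t * s\<^sup>2 = norm x * s" using s0 by (simp add: t_def power2_eq_square)
      ultimately have "4 * (norm x * s) \<le> 2 * \<omega> * ((norm x)\<^sup>2 + (norm x)\<^sup>2)"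
        by metis
      then have "4 * (norm x * s) \<le> 4 * (\<omega> * norm x) * norm x"
        by (simp add: power2_eq_square algebra_simps)
      then have "s \<le> \<omega> * norm x" using False by (simp add: mult.commute mult.left_commute)
      then show ?thesis by (simp add: s_def)
    qed
  qed
qed

lemma numrad_facts:
  fixes T :: "'b::complex_inner \<Rightarrow> 'b"
  assumes bT: "bounded_clinear T" and ex: "\<exists>z::'b. norm z = 1"
  shows "\<And>w. norm w = 1 \<Longrightarrow> cmod (cinner (T w) w) \<le> numrad T"
    and "\<And>z. cmod (cinner (T z) z) \<le> numrad T * (norm z)\<^sup>2"
    and "0 \<le> numrad T"
proof -
  have bl: "bounded_linear T" by (rule bcl_bl[OF bT])
  interpret T: bounded_linear T by (rule bl)
  have bdd: "bdd_above {cmod (cinner (T x) x) | x. norm x = 1}"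
  proof (rule bdd_aboveI[of _ "onorm T"])
    fix y assume "y \<in> {cmod (cinner (T x) x) | x. norm x = 1}"
    then obtain x where x1: "norm x = 1" and yx: "y = cmod (cinner (T x) x)" by blast
    have "cmod (cinner (T x) x) \<le> norm (T x) * norm x" by (rule cinner_cauchy)
    also have "\<dots> \<le> onorm T" using onorm[OF bl, of x] x1 by simp
    finally show "y \<le> onorm T" using yx by simp
  qed
  show w: "cmod (cinner (T w) w) \<le> numrad T" if "norm w = 1" for w
    unfolding numrad_def using that by (intro cSup_upper[OF _ bdd]) blast
  show z: "cmod (cinner (T z) z) \<le> numrad T * (norm z)\<^sup>2" for z
  proof -
    obtain w where w1: "norm w = 1" and zw: "z = norm z *\<^sub>R w" using unit_decomp[OF ex] by blast
    have "cinner (T z) z = complex_of_real ((norm z)\<^sup>2) * cinner (T w) w"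
      by (subst (1 2) zw) (simp add: T.scaleR cinner_scaleR_left cinner_scaleR_right power2_eq_square)
    then have "cmod (cinner (T z) z) = (norm z)\<^sup>2 * cmod (cinner (T w) w)"
      by (simp add: norm_mult norm_power)
    also have "\<dots> \<le> (norm z)\<^sup>2 * numrad T" using w[OF w1] by (simp add: mult_left_mono)
    finally show ?thesis by (simp add: mult.commute)
  qed
  obtain w :: 'b where "norm w = 1" using ex by blast
  then show "0 \<le> numrad T" using w[of w] by (meson norm_ge_zero order_trans)
qed

lemma alpha_le:
  fixes A :: "'b::complex_inner \<Rightarrow> 'b"
  assumes "norm w = 1"
  shows "alpha_op A \<le> (norm (A w))\<^sup>2"
  unfolding alpha_op_def
proof (rule cInf_lower)
  show "(norm (A w))\<^sup>2 \<in> {(norm (A x))\<^sup>2 | x. norm x = 1}" using assms by blast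
  show "bdd_below {(norm (A x))\<^sup>2 | x. norm x = 1}" by (rule bdd_belowI[of _ 0]) auto
qed

lemma i_half: "1 / (2 * \<i>) = - (\<i> / 2)"
  by (simp add: field_simps)

lemma g_bound:
  fixes T :: "'b::chilbert_space \<Rightarrow> 'b"
  assumes bT: "bounded_clinear T" and ex: "\<exists>z::'b. norm z = 1"
  shows "g_op T \<le> 2 * (numrad T)\<^sup>2"
proof -
  have bl: "bounded_linear T" by (rule bcl_bl[OF bT])
  interpret T: bounded_linear T by (rule bl)
  define B where "B = cadjoint T"
  define \<omega> where "\<omega> = numrad T"
  have P: "cinner (T x) y = cinner x (B y)" for x y unfolding B_def by (rule cadjoint_prop[OF bT])
  have om: "cmod (cinner (T z) z) \<le> \<omega> * (norm z)\<^sup>2" for z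
    unfolding \<omega>_def by (rule numrad_facts(2)[OF bT ex])
  have om0: "0 \<le> \<omega>" unfolding \<omega>_def by (rule numrad_facts(3)[OF bT ex])
  have BT: "cinner (B u) v = cnj (cinner (T v) u)" for u v
    by (simp add: P cinner_commute[of "B u"])
  have H1: "Re (cinner (re_part T u) v) = Re ((1/2) * cinner (T u) v) + Re ((1/2) * cinner (T v) u)" for u v
    by (simp add: re_part_def B_def[symmetric] cinner_scaleC_left cinner_add_left BT)
  have H2: "Re (cinner (im_part T u) v) = Re ((1/(2*\<i>)) * cinner (T u) v) + Re ((1/(2*\<i>)) * cinner (T v) u)" for u v
    by (simp add: im_part_def B_def[symmetric] cinner_scaleC_left cinner_diff_left BT i_half)
      (simp add: field_simps)
  have nb1: "norm (re_part T x) \<le> \<omega> * norm x" for x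
    by (rule herm_bound[OF bl om om0 _ H1]) simp
  have nb2: "norm (im_part T x) \<le> \<omega> * norm x" for x
    by (rule herm_bound[OF bl om om0 _ H2]) (simp add: norm_divide norm_mult)
  define a1 where "a1 = onorm (re_part T)"
  define a2 where "a2 = onorm (im_part T)"
  have a1: "norm (re_part T x) \<le> a1 * norm x" "0 \<le> a1" for x
    unfolding a1_def using onorm_le_gen[OF om0 nb1] by auto
  have a2: "norm (im_part T x) \<le> a2 * norm x" "0 \<le> a2" for x
    unfolding a2_def using onorm_le_gen[OF om0 nb2] by auto
  have a1w: "a1 \<le> \<omega>" unfolding a1_def by (rule onorm_bound[OF om0 nb1])
  have a2w: "a2 \<le> \<omega>" unfolding a2_def by (rule onorm_bound[OF om0 nb2])
  define K where "K = 2 * (a1\<^sup>2 + a2\<^sup>2)"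
  have sumb: "(norm (T x))\<^sup>2 + (norm (B x))\<^sup>2 \<le> K * (norm x)\<^sup>2" for x
  proof -
    have e1: "norm (re_part T x) = norm (T x + B x) / 2"
      by (simp add: re_part_def B_def[symmetric] norm_scaleC)
    have e2: "norm (im_part T x) = norm (T x - B x) / 2"
      by (simp add: im_part_def B_def[symmetric] norm_scaleC norm_divide norm_mult)
    have "(norm (T x))\<^sup>2 + (norm (B x))\<^sup>2 = 2 * ((norm (re_part T x))\<^sup>2 + (norm (im_part T x))\<^sup>2)"
      using parallelogram_real_inner[of "T x" "B x"] by (simp add: e1 e2 power_divide)
    also have "\<dots> \<le> 2 * ((a1 * norm x)\<^sup>2 + (a2 * norm x)\<^sup>2)"
      using a1 a2 by (intro mult_left_mono add_mono power_mono) auto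
    also have "\<dots> = K * (norm x)\<^sup>2" by (simp add: K_def power_mult_distrib algebra_simps)
    finally show ?thesis .
  qed
  obtain w0 :: 'b where w0: "norm w0 = 1" using ex by blast
  have scale: "\<exists>w r. norm w = 1 \<and> r = norm x \<and> T x = r *\<^sub>R T w" for x
  proof -
    obtain w where "norm w = 1" "x = norm x *\<^sub>R w" using unit_decomp[OF ex] by blast
    then show ?thesis by (metis T.scaleR)
  qed
  have nT_sq: "(onorm T)\<^sup>2 \<le> L" if L0: "0 \<le> L" and hL: "\<And>x. norm (T x) \<le> sqrt L * norm x" for L
  proof -
    have "onorm T \<le> sqrt L" by (rule onorm_bound[OF _ hL]) (simp add: L0)
    then have "(onorm T)\<^sup>2 \<le> (sqrt L)\<^sup>2" by (intro power_mono onorm_pos_le[OF bl])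
    then show ?thesis using L0 by simp
  qed
  have c1: "(onorm T)\<^sup>2 \<le> K - alpha_op B"
  proof (rule nT_sq)
    have "alpha_op B \<le> (norm (B w0))\<^sup>2" by (rule alpha_le[OF w0])
    also have "\<dots> \<le> K"
    proof -
      have "(norm (T w0))\<^sup>2 + (norm (B w0))\<^sup>2 \<le> K" using sumb[of w0] w0 by simp
      moreover have "0 \<le> (norm (T w0))\<^sup>2" by simp
      ultimately show ?thesis by linarith
    qed
    finally show "0 \<le> K - alpha_op B" by simp
    fix x
    obtain w r where w: "norm w = 1" "r = norm x" "T x = r *\<^sub>R T w" using scale by blast
    have "(norm (T w))\<^sup>2 \<le> K - alpha_op B"
      using sumb[of w] w alpha_le[OF w(1), of B] by simp
    then have "(norm (T x))\<^sup>2 \<le> (K - alpha_op B) * (norm x)\<^sup>2"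
    proof -
      have "(norm x)\<^sup>2 * (norm (T w))\<^sup>2 \<le> (norm x)\<^sup>2 * (K - alpha_op B)"
        by (rule mult_left_mono[OF \<open>(norm (T w))\<^sup>2 \<le> K - alpha_op B\<close>]) simp
      then show ?thesis using w by (simp add: power_mult_distrib mult.commute)
    qed
    then have "norm (T x) \<le> sqrt ((K - alpha_op B) * (norm x)\<^sup>2)"
      by (simp add: real_le_rsqrt)
    then show "norm (T x) \<le> sqrt (K - alpha_op B) * norm x" by (simp add: real_sqrt_mult)
  qed
  have aT: "alpha_op T * (norm x)\<^sup>2 \<le> (norm (T x))\<^sup>2" for x
  proof -
    obtain w r where w: "norm w = 1" "r = norm x" "T x = r *\<^sub>R T w" using scale by blast
    have "alpha_op T * r\<^sup>2 \<le> (norm (T w))\<^sup>2 * r\<^sup>2"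
      by (rule mult_right_mono[OF alpha_le[OF w(1)]]) simp
    then show ?thesis using w by (simp add: power_mult_distrib mult.commute)
  qed
  define L where "L = K - alpha_op T"
  have bB: "(norm (B x))\<^sup>2 \<le> L * (norm x)\<^sup>2" for x
    using sumb[of x] aT[of x] by (simp add: L_def algebra_simps)
  have L0: "0 \<le> L" using bB[of w0] w0 by (metis mult.right_neutral power_one zero_le_power2 order_trans)
  have bB': "norm (B x) \<le> sqrt L * norm x" for x
  proof -
    have "norm (B x) \<le> sqrt (L * (norm x)\<^sup>2)" using bB[of x] by (simp add: real_le_rsqrt)
    then show ?thesis by (simp add: real_sqrt_mult)
  qed
  have c2: "(onorm T)\<^sup>2 \<le> K - alpha_op T"
    unfolding L_def[symmetric]
  proof (rule nT_sq[OF L0])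
    fix x
    have "(norm (T x))\<^sup>2 = Re (cinner (T x) (T x))" by (simp add: cinner_self)
    also have "\<dots> = Re (cinner x (B (T x)))" by (simp add: P)
    also have "\<dots> \<le> cmod (cinner x (B (T x)))" by (rule complex_Re_le_cmod)
    also have "\<dots> \<le> norm x * norm (B (T x))" by (rule cinner_cauchy)
    also have "\<dots> \<le> norm x * (sqrt L * norm (T x))" by (intro mult_left_mono bB') simp
    finally have h: "(norm (T x))\<^sup>2 \<le> norm (T x) * (sqrt L * norm x)" by (simp add: algebra_simps)
    show "norm (T x) \<le> sqrt L * norm x"
    proof (cases "norm (T x) = 0")
      case True then show ?thesis using L0 by simp
    next
      case False
      then have "0 < norm (T x)" by simp
      then show ?thesis using h by (simp add: power2_eq_square)
    qed
  qed
  have "g_op T = (onorm T)\<^sup>2 + max (alpha_op T) (alpha_op B) - 2 * min (a1\<^sup>2) (a2\<^sup>2)"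
    by (simp add: g_op_def D_op_def B_def a1_def a2_def)
  also have "\<dots> \<le> K - 2 * min (a1\<^sup>2) (a2\<^sup>2)" using c1 c2 by (simp add: max_def)
  also have "\<dots> = 2 * max (a1\<^sup>2) (a2\<^sup>2)" by (simp add: K_def max_def min_def)
  also have "\<dots> \<le> 2 * \<omega>\<^sup>2" using a1w a2w a1(2) a2(2) by (simp add: power_mono)
  finally show ?thesis by (simp add: \<omega>_def)
qed

lemma offdiag_bcl:
  fixes R S :: "'a::complex_inner \<Rightarrow> 'a"
  assumes bR: "bounded_clinear R" and bS: "bounded_clinear S"
  shows "bounded_clinear (offdiag R S)"
proof -
  obtain KR where KR: "\<And>x. norm (R x) \<le> norm x * KR" using bR by (auto simp add: bounded_clinear_def)
  obtain KS where KS: "\<And>x. norm (S x) \<le> norm x * KS" using bS by (auto simp add: bounded_clinear_def)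
  have aR: "R (x + y) = R x + R y" "R (c *\<^sub>C x) = c *\<^sub>C R x" for x y c
    using bR by (simp_all add: bounded_clinear_def)
  have aS: "S (x + y) = S x + S y" "S (c *\<^sub>C x) = c *\<^sub>C S x" for x y c
    using bS by (simp_all add: bounded_clinear_def)
  have bound: "norm (offdiag R S p) \<le> norm p * (\<bar>KR\<bar> + \<bar>KS\<bar>)" for p
  proof -
    obtain x y where p: "p = (x, y)" by (cases p)
    have "norm (R y, S x) \<le> norm (R y) + norm (S x)" by (rule norm_Pair_le)
    also have "\<dots> \<le> norm y * \<bar>KR\<bar> + norm x * \<bar>KS\<bar>"
    proof (rule add_mono)
      show "norm (R y) \<le> norm y * \<bar>KR\<bar>"
        using KR[of y] by (meson abs_ge_self mult_left_mono norm_ge_zero order_trans)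
      show "norm (S x) \<le> norm x * \<bar>KS\<bar>"
        using KS[of x] by (meson abs_ge_self mult_left_mono norm_ge_zero order_trans)
    qed
    also have "\<dots> \<le> norm p * \<bar>KR\<bar> + norm p * \<bar>KS\<bar>"
      using norm_fst_le[of x y] norm_snd_le[of y x] p
      by (intro add_mono mult_right_mono) auto
    finally show ?thesis by (simp add: p offdiag_def algebra_simps)
  qed
  show ?thesis unfolding bounded_clinear_def
    using bound
    by (auto simp: offdiag_def aR aS scaleC_prod_def split: prod.splits)
qed

theorem corollary2p4:
  fixes R S :: "'a::chilbert_space \<Rightarrow> 'a"
  assumes "bounded_clinear R" and "bounded_clinear S"
    and "\<exists>x::'a. x \<noteq> 0"
    and "(onorm R + onorm S)\<^sup>2 \<le> 2 * g_op (offdiag R S)"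
  shows "numrad (offdiag R S) = (onorm R + onorm S) / 2"
proof -
  let ?T = "offdiag R S"
  have bT: "bounded_clinear ?T" by (rule offdiag_bcl[OF assms(1,2)])
  have blR: "bounded_linear R" by (rule bcl_bl[OF assms(1)])
  have blS: "bounded_linear S" by (rule bcl_bl[OF assms(2)])
  obtain a :: 'a where "a \<noteq> 0" using assms(3) by blast
  then have ex: "\<exists>z::'a \<times> 'a. norm z = 1"
    by (intro exI[of _ "(sgn a, 0)"]) (simp add: norm_sgn)
  define m where "m = (onorm R + onorm S) / 2"
  have m0: "0 \<le> m" using onorm_pos_le[OF blR] onorm_pos_le[OF blS] by (simp add: m_def)
  have upper: "numrad ?T \<le> m"
    unfolding numrad_def
  proof (rule cSup_least)
    show "{cmod (cinner (?T x) x) | x. norm x = 1} \<noteq> {}" using ex by blast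
    fix y assume "y \<in> {cmod (cinner (?T x) x) | x. norm x = 1}"
    then obtain p where p1: "norm p = 1" and yp: "y = cmod (cinner (?T p) p)" by blast
    obtain u v where p: "p = (u, v)" by (cases p)
    have uv: "(norm u)\<^sup>2 + (norm v)\<^sup>2 = 1" using p1 p by (simp add: norm_Pair)
    have "cinner (?T p) p = cinner (R v) u + cinner (S u) v"
      by (simp add: p offdiag_def cinner_prod_def)
    then have "y \<le> cmod (cinner (R v) u) + cmod (cinner (S u) v)"
      using yp by (simp add: norm_triangle_ineq)
    also have "\<dots> \<le> norm (R v) * norm u + norm (S u) * norm v"
      by (intro add_mono cinner_cauchy)
    also have "\<dots> \<le> (onorm R * norm v) * norm u + (onorm S * norm u) * norm v"
      by (intro add_mono mult_right_mono onorm blR blS norm_ge_zero)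
    also have "\<dots> = (onorm R + onorm S) * (norm u * norm v)" by (simp add: algebra_simps)
    also have "\<dots> \<le> (onorm R + onorm S) * (1/2)"
    proof (rule mult_left_mono)
      have "0 \<le> (norm u - norm v)\<^sup>2" by simp
      then show "norm u * norm v \<le> 1/2" using uv by (simp add: power2_eq_square algebra_simps)
      show "0 \<le> onorm R + onorm S" using m0 by (simp add: m_def)
    qed
    finally show "y \<le> m" by (simp add: m_def)
  qed
  have om0: "0 \<le> numrad ?T" by (rule numrad_facts(3)[OF bT ex])
  have m2: "2 * m = onorm R + onorm S" by (simp add: m_def)
  have "(2 * m)\<^sup>2 \<le> 2 * g_op ?T" unfolding m2 by (rule assms(4))
  also have "\<dots> \<le> 2 * (2 * (numrad ?T)\<^sup>2)" using g_bound[OF bT ex] by simp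
  also have "\<dots> = (2 * numrad ?T)\<^sup>2" by (simp add: power2_eq_square)
  finally have "2 * m \<le> 2 * numrad ?T" using om0 by (simp add: power2_le_iff_abs_le)
  then show ?thesis using upper by (simp add: m_def)
qed

end
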